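(* Suppose $\xi\star\pi\in\perp\!\!\!\perp$. Let $\xi'\star\pi'$ be obtained from $\xi\star\pi$ by replacing some occurrences of $A$ by $(\ell_u)A=k_{u\cdot\pi_0}$ and some occurrences of the variables $q_0,\dots,q_N$ by $t_0,\dots,t_N$ respectively, where $t_0,\dots,t_N,u$ are arbitrary terms. Then, for every term $t$, $\xi'\star\pi'\in\perp\!\!\!\perp$ and $\xi'\star\pi'\cdot t\in\perp\!\!\!\perp$.
   Context: Fix an integer $N\ge 0$. The set $\Lambda$ of terms is the smallest set containing the constants $B,C,I,K,W,cc,A$ and $p,q_0,\dots,q_N$, closed under application $(\xi)\eta$ (written $\xi\eta$), and containing, for each sequence $(\xi_i)_{i\in\mathbb N}$ of closed terms (no occurrence of $p,q_0,\dots,q_N$), a constant $\bigwedge_i\xi_i$ (injectively, well-founded). Stacks: finite sequences $t_0\cdot\ldots\cdot t_{n-1}\cdot\pi_0$ of terms, $\pi_0$ the empty stack; $\Pi$ the set of stacks. If $\pi=t_0\cdot\ldots\cdot t_{n-1}\cdot\pi_0$, then $\pi\cdot t$ denotes the stack $t_0\cdot\ldots\cdot t_{n-1}\cdot t\cdot\pi_0$. $\ell_t=((C)(B)CB)t$, $k_{\pi_0}=A$, $k_{t\cdot\pi}=(\ell_t)k_\pi$; $\sigma=(BW)(C)(B)BB$, $\underline0=(K)I$, $\underline{n+1}=(\sigma)\underline n$. Execution $\succ$: least preorder on $\Lambda\times\Pi$ with $(\xi)\eta\star\pi\succ\xi\star\eta\cdot\pi$; $B\star\xi\cdot\eta\cdot\zeta\cdot\pi\succ\xi\star(\eta)\zeta\cdot\pi$;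 $C\star\xi\cdot\eta\cdot\zeta\cdot\pi\succ\xi\star\zeta\cdot\eta\cdot\pi$; $I\star\xi\cdot\pi\succ\xi\star\pi$; $K\star\xi\cdot\eta\cdot\pi\succ\xi\star\pi$; $W\star\xi\cdot\eta\cdot\pi\succ\xi\star\eta\cdot\eta\cdot\pi$; $cc\star\xi\cdot\pi\succ\xi\star k_\pi\cdot\pi$; $A\star\xi\cdot\pi\succ\xi\star\pi_0$; $\bigwedge_i\xi_i\star\underline n\cdot\pi\succ\xi_n\star\pi$. Pole $\perp\!\!\!\perp=\{\xi\star\pi:\exists\varpi,\ \xi\star\pi\succ p\star\varpi\}$. *)

theory Defs
  imports Main
begin

text \<open>Constructor Inf f stands for the
 constant bigwedge_i f(i); it is an atomic constant (well-formedness below requires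
 its components to be closed terms of Lambda).\<close>

datatype trm =
    Bc | Cc | Ic | Kc | Wc | CCc | Ac
  | Pv
  | Qv nat
  | App trm trm
  | Inf "nat \<Rightarrow> trm"

fun closed :: "trm \<Rightarrow> bool" where
  "closed Pv = False"
| "closed (Qv i) = False"
| "closed (App a b) = (closed a \<and> closed b)"
| "closed _ = True"

text \<open>Membership in the set Lambda of terms, for the fixed N.\<close>
primrec wf :: "nat \<Rightarrow> trm \<Rightarrow> bool" where
  "wf N Bc = True" | "wf N Cc = True" | "wf N Ic = True" | "wf N Kc = True"
| "wf N Wc = True" | "wf N CCc = True" | "wf N Ac = True" | "wf N Pv = True"
| "wf N (Qv i) = (i \<le> N)"
| "wf N (App a b) = (wf N a \<and> wf N b)"
| "wf N (Inf f) = (\<forall>i. closed (f i) \<and> wf N (f i))"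

type_synonym stack = "trm list"

definition ell :: "trm \<Rightarrow> trm" where
  "ell t = App (App Cc (App (App Bc Cc) Bc)) t"

fun kst :: "stack \<Rightarrow> trm" where
  "kst [] = Ac"
| "kst (t # \<pi>) = App (ell t) (kst \<pi>)"

definition sigma :: trm where
  "sigma = App (App Bc Wc) (App Cc (App (App Bc Bc) Bc))"

fun numeral_trm :: "nat \<Rightarrow> trm" where
  "numeral_trm 0 = App Kc Ic"
| "numeral_trm (Suc n) = App sigma (numeral_trm n)"

inductive step :: "trm \<times> stack \<Rightarrow> trm \<times> stack \<Rightarrow> bool" where
  push: "step (App \<xi> \<eta>, \<pi>) (\<xi>, \<eta> # \<pi>)"
| B: "step (Bc, \<xi> # \<eta> # \<zeta> # \<pi>) (\<xi>, App \<eta> \<zeta> # \<pi>)"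
| C: "step (Cc, \<xi> # \<eta> # \<zeta> # \<pi>) (\<xi>, \<zeta> # \<eta> # \<pi>)"
| I: "step (Ic, \<xi> # \<pi>) (\<xi>, \<pi>)"
| K: "step (Kc, \<xi> # \<eta> # \<pi>) (\<xi>, \<pi>)"
| W: "step (Wc, \<xi> # \<eta> # \<pi>) (\<xi>, \<eta> # \<eta> # \<pi>)"
| cc: "step (CCc, \<xi> # \<pi>) (\<xi>, kst \<pi> # \<pi>)"
| A: "step (Ac, \<xi> # \<pi>) (\<xi>, [])"
| Inf: "step (Inf f, numeral_trm n # \<pi>) (f n, \<pi>)"

abbreviation exec :: "trm \<times> stack \<Rightarrow> trm \<times> stack \<Rightarrow> bool" where
  "exec \<equiv> step\<^sup>*\<^sup>*"

definition pole :: "(trm \<times> stack) set" where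
  "pole = {(\<xi>, \<pi>). \<exists>\<rho>. exec (\<xi>, \<pi>) (Pv, \<rho>)}"

inductive repl :: "nat \<Rightarrow> trm \<Rightarrow> (nat \<Rightarrow> trm) \<Rightarrow> trm \<Rightarrow> trm \<Rightarrow> bool"
  for N u ts where
  refl: "repl N u ts s s"
| rA: "repl N u ts Ac (kst [u])"
| rQ: "i \<le> N \<Longrightarrow> repl N u ts (Qv i) (ts i)"
| rApp: "repl N u ts a a' \<Longrightarrow> repl N u ts b b' \<Longrightarrow> repl N u ts (App a b) (App a' b')"

end

theory Submission
  imports Defs
begin

inductive R :: "(nat \<Rightarrow> trm) \<Rightarrow> trm \<Rightarrow> trm \<Rightarrow> bool" for ts where
  Rrefl: "R ts s s"
| RA: "R ts Ac (kst \<rho>)"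
| RQ: "R ts (Qv i) (ts i)"
| RApp: "R ts a a' \<Longrightarrow> R ts b b' \<Longrightarrow> R ts (App a b) (App a' b')"

lemma repl_R: "repl N u ts a b \<Longrightarrow> R ts a b"
proof (induction rule: repl.induct)
  case rA
  show ?case using RA[of ts "[u]"] by simp
qed (auto intro: R.intros)

lemma R_App0: "R ts z x \<Longrightarrow> z = App a b \<Longrightarrow> \<exists>a' b'. x = App a' b' \<and> R ts a a' \<and> R ts b b'"
  by (induction rule: R.induct) (auto intro: R.intros)

lemma R_App: "R ts (App a b) x \<Longrightarrow> \<exists>a' b'. x = App a' b' \<and> R ts a a' \<and> R ts b b'"
  using R_App0 by blast

lemma R_const:
  "R ts x y \<Longrightarrow> x \<in> {Bc, Cc, Ic, Kc, Wc, CCc, Pv} \<or> (\<exists>f. x = Inf f) \<Longrightarrow> y = x"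
  by (induction rule: R.induct) auto

lemma R_Ac0: "R ts z y \<Longrightarrow> z = Ac \<Longrightarrow> y = Ac \<or> (\<exists>\<rho>. y = kst \<rho>)"
  by (induction rule: R.induct) auto

lemma R_Ac: "R ts Ac y \<Longrightarrow> y = Ac \<or> (\<exists>\<rho>. y = kst \<rho>)"
  using R_Ac0 by blast

fun noAQ :: "trm \<Rightarrow> bool" where
  "noAQ Ac = False" | "noAQ (Qv i) = False" | "noAQ (App a b) = (noAQ a \<and> noAQ b)"
| "noAQ _ = True"

lemma R_noAQ: "R ts x y \<Longrightarrow> noAQ x \<Longrightarrow> y = x"
  by (induction rule: R.induct) auto

lemma noAQ_num: "noAQ (numeral_trm n)"
  by (induction n) (auto simp: sigma_def)

lemma R_kst: "list_all2 (R ts) \<pi> \<pi>0 \<Longrightarrow> R ts (kst \<pi>) (kst (\<pi>0 @ e))"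
  by (induction rule: list_all2_induct) (auto simp: ell_def intro: R.intros)

lemma ell_exec: "exec (App (ell t) X, a # s) (X, App a t # s)"
proof -
  let ?D = "App (App Bc Cc) Bc"
  have "step (App (ell t) X, a # s) (ell t, X # a # s)" by (rule step.push)
  moreover have "step (ell t, X # a # s) (App Cc ?D, t # X # a # s)" unfolding ell_def by (rule step.push)
  moreover have "step (App Cc ?D, t # X # a # s) (Cc, ?D # t # X # a # s)" by (rule step.push)
  moreover have "step (Cc, ?D # t # X # a # s) (?D, X # t # a # s)" by (rule step.C)
  moreover have "step (?D, X # t # a # s) (App Bc Cc, Bc # X # t # a # s)" by (rule step.push)
  moreover have "step (App Bc Cc, Bc # X # t # a # s) (Bc, Cc # Bc # X # t # a # s)" by (rule step.push)
  moreover have "step (Bc, Cc # Bc # X # t # a # s) (Cc, App Bc X # t # a # s)" by (rule step.B)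
  moreover have "step (Cc, App Bc X # t # a # s) (App Bc X, a # t # s)" by (rule step.C)
  moreover have "step (App Bc X, a # t # s) (Bc, X # a # t # s)" by (rule step.push)
  moreover have "step (Bc, X # a # t # s) (X, App a t # s)" by (rule step.B)
  ultimately show ?thesis
    by (meson converse_rtranclp_into_rtranclp rtranclp.rtrancl_refl)
qed

lemma kst_exec: "exec (kst \<rho>, a # s) (a, \<rho>)"
proof (induction \<rho> arbitrary: a s)
  case Nil
  then show ?case using step.A by fastforce
next
  case (Cons t \<rho>)
  have "exec (kst (t # \<rho>), a # s) (kst \<rho>, App a t # s)" using ell_exec by simp
  also have "exec \<dots> (App a t, \<rho>)" by (rule Cons)
  also have "exec \<dots> (a, t # \<rho>)" using step.push by fastforce
  finally show ?case .
qed

lemma sim: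
  assumes "step (x, \<pi>) (y, \<sigma>)" "R ts x x'" "list_all2 (R ts) \<pi> \<pi>0"
  shows "\<exists>y' \<sigma>0 e'. exec (x', \<pi>0 @ e) (y', \<sigma>0 @ e') \<and> R ts y y' \<and> list_all2 (R ts) \<sigma> \<sigma>0"
  using assms(1)
proof (cases rule: step.cases)
  case (push \<eta>)
  then obtain a' b' where x': "x' = App a' b'" "R ts y a'" "R ts \<eta> b'" using assms R_App by blast
  have "exec (x', \<pi>0 @ e) (a', (b' # \<pi>0) @ e)" using x' step.push by fastforce
  then show ?thesis using x' assms push by blast
next
  case (B \<eta> \<zeta> \<pi>1)
  then have x': "x' = Bc" using R_const[OF assms(2)] by simp
  from B assms obtain a b c r where p: "\<pi>0 = a # b # c # r" "R ts y a" "R ts \<eta> b" "R ts \<zeta> c" "list_all2 (R ts) \<pi>1 r"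
    by (auto simp: list_all2_Cons1)
  have "exec (x', \<pi>0 @ e) (a, (App b c # r) @ e)" using x' p step.B by fastforce
  moreover have "list_all2 (R ts) \<sigma> (App b c # r)" using p B by (simp add: RApp)
  ultimately show ?thesis using p by blast
next
  case (C \<eta> \<zeta> \<pi>1)
  then have x': "x' = Cc" using R_const[OF assms(2)] by simp
  from C assms obtain a b c r where p: "\<pi>0 = a # b # c # r" "R ts y a" "R ts \<eta> b" "R ts \<zeta> c" "list_all2 (R ts) \<pi>1 r"
    by (auto simp: list_all2_Cons1)
  have "exec (x', \<pi>0 @ e) (a, (c # b # r) @ e)" using x' p step.C by fastforce
  moreover have "list_all2 (R ts) \<sigma> (c # b # r)" using p C by simp
  ultimately show ?thesis using p by blast
next
  case I
  then have x': "x' = Ic" using R_const[OF assms(2)] by simp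
  from I assms obtain a r where p: "\<pi>0 = a # r" "R ts y a" "list_all2 (R ts) \<sigma> r"
    by (auto simp: list_all2_Cons1)
  have "exec (x', \<pi>0 @ e) (a, r @ e)" using x' p step.I by fastforce
  then show ?thesis using p by blast
next
  case (K \<eta>)
  then have x': "x' = Kc" using R_const[OF assms(2)] by simp
  from K assms obtain a b r where p: "\<pi>0 = a # b # r" "R ts y a" "list_all2 (R ts) \<sigma> r"
    by (auto simp: list_all2_Cons1)
  have "exec (x', \<pi>0 @ e) (a, r @ e)" using x' p step.K by fastforce
  then show ?thesis using p by blast
next
  case (W \<eta> \<pi>1)
  then have x': "x' = Wc" using R_const[OF assms(2)] by simp
  from W assms obtain a b r where p: "\<pi>0 = a # b # r" "R ts y a" "R ts \<eta> b" "list_all2 (R ts) \<pi>1 r"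
    by (auto simp: list_all2_Cons1)
  have "exec (x', \<pi>0 @ e) (a, (b # b # r) @ e)" using x' p step.W by fastforce
  moreover have "list_all2 (R ts) \<sigma> (b # b # r)" using p W by simp
  ultimately show ?thesis using p by blast
next
  case (cc \<pi>1)
  then have x': "x' = CCc" using R_const[OF assms(2)] by simp
  from cc assms obtain a r where p: "\<pi>0 = a # r" "R ts y a" "list_all2 (R ts) \<pi>1 r"
    by (auto simp: list_all2_Cons1)
  have "exec (x', \<pi>0 @ e) (a, (kst (r @ e) # r) @ e)" using x' p step.cc by fastforce
  moreover have "R ts (kst \<pi>1) (kst (r @ e))" using p R_kst by blast
  ultimately have "list_all2 (R ts) \<sigma> (kst (r @ e) # r)" using p cc by simp
  with \<open>exec (x', \<pi>0 @ e) (a, (kst (r @ e) # r) @ e)\<close> show ?thesis using p by blast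
next
  case (A \<pi>1)
  from A assms obtain a r where p: "\<pi>0 = a # r" "R ts y a"
    by (auto simp: list_all2_Cons1)
  from A assms R_Ac consider "x' = Ac" | \<rho> where "x' = kst \<rho>" by blast
  then show ?thesis
  proof cases
    case 1
    have "exec (x', \<pi>0 @ e) (a, [] @ [])" using 1 p step.A by fastforce
    then show ?thesis using p A by blast
  next
    case 2
    have "exec (x', \<pi>0 @ e) (a, [] @ \<rho>)" using 2 p kst_exec by simp
    then show ?thesis using p A by blast
  qed
next
  case (Inf f n)
  then have x': "x' = Inf f" using R_const[OF assms(2)] by auto
  from Inf assms obtain b r where p: "\<pi>0 = b # r" "R ts (numeral_trm n) b" "list_all2 (R ts) \<sigma> r"
    by (auto simp: list_all2_Cons1)
  then have "b = numeral_trm n" using R_noAQ noAQ_num by blast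
  then have "exec (x', \<pi>0 @ e) (f n, r @ e)" using x' p step.Inf by fastforce
  then show ?thesis using p Inf by (blast intro: Rrefl)
qed

lemma main:
  assumes "exec c (Pv, \<rho>)"
  shows "\<And>x' \<pi>0 e. R ts (fst c) x' \<Longrightarrow> list_all2 (R ts) (snd c) \<pi>0 \<Longrightarrow> \<exists>\<rho>'. exec (x', \<pi>0 @ e) (Pv, \<rho>')"
  using assms
proof (induction c rule: converse_rtranclp_induct)
  case base
  then have "x' = Pv" using R_const by simp
  then show ?case by blast
next
  case (step a b)
  obtain x \<pi> where a: "a = (x, \<pi>)" by (cases a)
  obtain y \<sigma> where b: "b = (y, \<sigma>)" by (cases b)
  have st: "step (x, \<pi>) (y, \<sigma>)" using step.hyps(1) a b by simp
  have r1: "R ts x x'" using step.prems(1) a by simp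
  have r2: "list_all2 (R ts) \<pi> \<pi>0" using step.prems(2) a by simp
  obtain y' \<sigma>0 e' where s: "exec (x', \<pi>0 @ e) (y', \<sigma>0 @ e')" "R ts y y'" "list_all2 (R ts) \<sigma> \<sigma>0"
    using sim[OF st r1 r2] by blast
  have "R ts (fst b) y'" "list_all2 (R ts) (snd b) \<sigma>0" using s b by simp_all
  then obtain \<rho>' where "exec (y', \<sigma>0 @ e') (Pv, \<rho>')" using step.IH by blast
  then show ?case using s(1) by (meson rtranclp_trans)
qed

theorem lemma3:
  fixes N :: nat and \<xi> \<xi>' u t :: trm and \<pi> \<pi>' :: stack and ts :: "nat \<Rightarrow> trm"
  assumes "wf N \<xi>" and "\<forall>s\<in>set \<pi>. wf N s"
    and "\<forall>i\<le>N. wf N (ts i)" and "wf N u" and "wf N t"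
    and "(\<xi>, \<pi>) \<in> pole"
    and "repl N u ts \<xi> \<xi>'" and "list_all2 (repl N u ts) \<pi> \<pi>'"
  shows "(\<xi>', \<pi>') \<in> pole \<and> (\<xi>', \<pi>' @ [t]) \<in> pole"
proof -
  obtain \<rho> where ex: "exec (\<xi>, \<pi>) (Pv, \<rho>)" using assms(6) unfolding pole_def by blast
  have r1: "R ts \<xi> \<xi>'" using assms(7) repl_R by blast
  have r2: "list_all2 (R ts) \<pi> \<pi>'" using list_all2_mono[OF assms(8) repl_R] .
  have "\<exists>\<rho>'. exec (\<xi>', \<pi>' @ []) (Pv, \<rho>')" using main[OF ex, of ts \<xi>' \<pi>' "[]"] r1 r2 by simp
  moreover have "\<exists>\<rho>'. exec (\<xi>', \<pi>' @ [t]) (Pv, \<rho>')" using main[OF ex, of ts \<xi>' \<pi>' "[t]"] r1 r2 by simp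
  ultimately show ?thesis unfolding pole_def by simp
qed

end
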